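(* Let $n \ge 0$ and let $\mathcal{A}$ be a UFA with $n$ states over a finite alphabet $\Sigma$ that recognizes a language $L \subseteq \Sigma^*$. Then there exists a UFA with at most $\sqrt{n+1} \cdot 2^{n/2}$ states that recognizes the language $\Sigma^* \setminus L$.
   Context: An NFA is a quintuple $\mathcal{A} = (Q,\Sigma,\delta,I,F)$ with $Q$ a finite set of states, $\Sigma$ a finite alphabet, $\delta \subseteq Q \times \Sigma \times Q$ the transition relation, $I \subseteq Q$ the initial states and $F \subseteq Q$ the accepting states. A run on $w = a_1\cdots a_m$ is a sequence $q_0 \xrightarrow{a_1} q_1 \cdots \xrightarrow{a_m} q_m$ with $(q_{i-1},a_i,q_i)\in\delta$; it is accepting if $q_0 \in I$ and $q_m \in F$. $L(\mathcal{A})$ is the set of words having an accepting run. A UFA (unambiguous finite automaton) is an NFA in which every word $w \in \Sigma^*$ has at most one accepting run. A UFA recognizes $L$ if $L(\mathcal{A}) = L$. *)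

theory Defs
  imports Complex_Main
begin

record ('q, 'a) nfa =
  states :: "'q set"
  alphabet :: "'a set"
  trans :: "('q \<times> 'a \<times> 'q) set"
  init :: "'q set"
  final :: "'q set"

definition wf_nfa :: "('q, 'a) nfa \<Rightarrow> bool" where
  "wf_nfa A \<longleftrightarrow> finite (states A) \<and> finite (alphabet A)
     \<and> trans A \<subseteq> states A \<times> alphabet A \<times> states A
     \<and> init A \<subseteq> states A \<and> final A \<subseteq> states A"

definition is_run :: "('q, 'a) nfa \<Rightarrow> 'a list \<Rightarrow> 'q list \<Rightarrow> bool" where
  "is_run A w qs \<longleftrightarrow> length qs = Suc (length w)
     \<and> (\<forall>i < length w. (qs ! i, w ! i, qs ! Suc i) \<in> trans A)"

definition accepting_run :: "('q, 'a) nfa \<Rightarrow> 'a list \<Rightarrow> 'q list \<Rightarrow> bool" where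
  "accepting_run A w qs \<longleftrightarrow> is_run A w qs \<and> hd qs \<in> init A \<and> last qs \<in> final A"

definition lang :: "('q, 'a) nfa \<Rightarrow> 'a list set" where
  "lang A = {w. w \<in> lists (alphabet A) \<and> (\<exists>qs. accepting_run A w qs)}"

definition ufa :: "('q, 'a) nfa \<Rightarrow> bool" where
  "ufa A \<longleftrightarrow> wf_nfa A \<and>
     (\<forall>w \<in> lists (alphabet A). \<forall>qs qs'. accepting_run A w qs \<and> accepting_run A w qs' \<longrightarrow> qs = qs')"

end

theory Submission
  imports Defs
begin

definition cliq :: "('v \<Rightarrow> 'v \<Rightarrow> bool) \<Rightarrow> 'v set \<Rightarrow> 'v set set" where
  "cliq R S = {X. X \<subseteq> S \<and> (\<forall>u\<in>X. \<forall>w\<in>X. u \<noteq> w \<longrightarrow> R u w)}"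

lemma cliq_fin: "finite S \<Longrightarrow> finite (cliq R S)"
  by (rule finite_subset[of _ "Pow S"]) (auto simp: cliq_def)

lemma cliq_pow: "finite S \<Longrightarrow> card (cliq R S) \<le> 2 ^ card S"
proof -
  assume f: "finite S"
  have "card (cliq R S) \<le> card (Pow S)"
    by (rule card_mono) (auto simp: cliq_def f)
  thus ?thesis by (simp add: card_Pow f)
qed

lemma cliq_un:
  assumes "finite A" "finite B"
  shows "card (cliq R (A \<union> B)) \<le> card (cliq R A) * card (cliq R B)"
proof -
  have "cliq R (A\<union>B) \<subseteq> (\<lambda>(a,b). a \<union> b) ` (cliq R A \<times> cliq R B)"
  proof
    fix X assume "X \<in> cliq R (A\<union>B)"
    then have "X = (X\<inter>A) \<union> (X\<inter>B)" "X\<inter>A \<in> cliq R A" "X \<inter> B \<in> cliq R B" by (auto simp: cliq_def)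
    thus "X \<in> (\<lambda>(a,b). a \<union> b) ` (cliq R A \<times> cliq R B)"
      by (intro image_eqI[of X _ "(X\<inter>A, X\<inter>B)"]) auto
  qed
  hence "card (cliq R (A \<union> B)) \<le> card ((\<lambda>(a,b). a \<union> b) ` (cliq R A \<times> cliq R B))"
    by (intro card_mono finite_imageI finite_cartesian_product cliq_fin assms)
  also have "\<dots> \<le> card (cliq R A \<times> cliq R B)" by (rule card_image_le) (intro finite_cartesian_product cliq_fin assms)
  finally show ?thesis by (simp add: card_cartesian_product)
qed

lemma cliq_split:
  assumes "finite S" "v \<in> S"
  shows "card (cliq R S) \<le> card (cliq R (S-{v})) + card (cliq R {u\<in>S-{v}. R u v})"
proof -
  have "cliq R S \<subseteq> cliq R (S-{v}) \<union> insert v ` cliq R {u\<in>S-{v}. R u v}"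
  proof
    fix X assume X: "X \<in> cliq R S"
    show "X \<in> cliq R (S-{v}) \<union> insert v ` cliq R {u\<in>S-{v}. R u v}"
    proof (cases "v \<in> X")
      case True
      then have "X = insert v (X - {v})" by auto
      moreover have "X - {v} \<in> cliq R {u\<in>S-{v}. R u v}" using X True by (auto simp: cliq_def)
      ultimately show ?thesis by blast
    next
      case False then show ?thesis using X by (auto simp: cliq_def)
    qed
  qed
  hence "card (cliq R S) \<le> card (cliq R (S-{v}) \<union> insert v ` cliq R {u\<in>S-{v}. R u v})"
    by (intro card_mono finite_UnI finite_imageI cliq_fin) (use assms in auto)
  also have "\<dots> \<le> card (cliq R (S-{v})) + card (insert v ` cliq R {u\<in>S-{v}. R u v})" by (rule card_Un_le)
  also have "\<dots> \<le> card (cliq R (S-{v})) + card (cliq R {u\<in>S-{v}. R u v})"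
    using card_image_le[OF cliq_fin] assms by (simp add: card_image_le cliq_fin)
  finally show ?thesis .
qed

lemma cc: "finite S \<Longrightarrow> card (cliq E S) * card (cliq (\<lambda>u w. \<not> E u w) S) \<le> (card S + 1) * 2 ^ card S"
proof (induction "card S" arbitrary: S rule: less_induct)
  case less
  show ?case
  proof (cases "S = {}")
    case True
    have "cliq E {} = {{}}" "cliq (\<lambda>u w. \<not> E u w) {} = {{}}" by (auto simp: cliq_def)
    then show ?thesis using True by simp
  next
    case False
    then obtain v where v: "v \<in> S" by blast
    define S' where "S' = S - {v}"
    define N where "N = {u\<in>S'. E u v}"
    define M where "M = {u\<in>S'. \<not> E u v}"
    define m where "m = card S'"
    have fS': "finite S'" "finite N" "finite M" using less.prems by (auto simp: S'_def N_def M_def)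
    have S'NM: "S' = N \<union> M" "N \<inter> M = {}" by (auto simp: N_def M_def)
    have m: "m = card N + card M" using S'NM fS' by (simp add: m_def card_Un_disjoint)
    have cS: "card S = Suc m" using card_Suc_Diff1[OF less.prems v] by (simp add: m_def S'_def)
    have lt: "card S' < card S" "card N < card S" "card M < card S"
      using cS m by (auto simp: m_def)
    let ?c = "card (cliq E S)" and ?d = "card (cliq (\<lambda>u w. \<not> E u w) S)"
    let ?cP = "card (cliq E S')" and ?dP = "card (cliq (\<lambda>u w. \<not> E u w) S')"
    let ?cN = "card (cliq E N)" and ?dN = "card (cliq (\<lambda>u w. \<not> E u w) N)"
    let ?cM = "card (cliq E M)" and ?dM = "card (cliq (\<lambda>u w. \<not> E u w) M)"
    have c: "?c \<le> ?cP + ?cN" using cliq_split[OF less.prems v, of E] by (simp add: S'_def N_def)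
    have d: "?d \<le> ?dP + ?dM" using cliq_split[OF less.prems v, of "\<lambda>u w. \<not> E u w"] by (simp add: S'_def M_def)
    have c0: "?cP \<le> ?cN * ?cM" using cliq_un[of N M E] fS' S'NM by simp
    have d0: "?dP \<le> ?dN * ?dM" using cliq_un[of N M "\<lambda>u w. \<not> E u w"] fS' S'NM by simp
    have IH0: "?cP * ?dP \<le> (m+1) * 2^m" using less.hyps[OF lt(1) fS'(1)] by (simp add: m_def)
    have IHN: "?cN * ?dN \<le> (card N+1) * 2^card N" using less.hyps[OF lt(2) fS'(2)] by simp
    have IHM: "?cM * ?dM \<le> (card M+1) * 2^card M" using less.hyps[OF lt(3) fS'(3)] by simp
    have pN: "?cN \<le> 2 ^ card N" by (rule cliq_pow[OF fS'(2)])
    have pM: "?dM \<le> 2 ^ card M" by (rule cliq_pow[OF fS'(3)])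
    have e2: "(2::nat)^m = 2^card N * 2^card M" using m by (simp add: power_add)
    have t1: "?cP * ?dM \<le> (card M + 1) * 2^m"
    proof -
      have "?cP * ?dM \<le> ?cN * ?cM * ?dM" using c0 by (rule mult_le_mono1)
      also have "\<dots> = ?cN * (?cM * ?dM)" by (rule mult.assoc)
      also have "\<dots> \<le> 2 ^ card N * ((card M+1) * 2^card M)" using pN IHM by (rule mult_le_mono)
      also have "\<dots> = (card M + 1) * 2^m" using e2 by (simp add: algebra_simps)
      finally show ?thesis .
    qed
    have t2: "?cN * ?dP \<le> (card N + 1) * 2^m"
    proof -
      have "?cN * ?dP \<le> ?cN * (?dN * ?dM)" using d0 by (rule mult_le_mono2)
      also have "\<dots> = (?cN * ?dN) * ?dM" by (rule mult.assoc[symmetric])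
      also have "\<dots> \<le> ((card N+1) * 2^card N) * 2 ^ card M" using IHN pM by (rule mult_le_mono)
      also have "\<dots> = (card N + 1) * 2^m" using e2 by (simp add: algebra_simps)
      finally show ?thesis .
    qed
    have t3: "?cN * ?dM \<le> 2^m" unfolding e2 by (rule mult_le_mono[OF pN pM])
    have h1: "?c * ?d \<le> (?cP + ?cN) * (?dP + ?dM)" using c d by (rule mult_le_mono)
    have h2: "(?cP + ?cN) * (?dP + ?dM) = ?cP * ?dP + ?cP * ?dM + ?cN * ?dP + ?cN * ?dM" by (simp add: algebra_simps)
    have h3: "?cP * ?dP + ?cP * ?dM + ?cN * ?dP + ?cN * ?dM \<le> (m+1) * 2^m + (card M + 1) * 2^m + (card N + 1) * 2^m + 2^m"
      by (intro add_le_mono IH0 t1 t2 t3)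
    have h4: "(m+1) * 2^m + (card M + 1) * 2^m + (card N + 1) * 2^m + 2^m = (card S + 1) * 2 ^ card S"
    proof -
      have "(m+1) * 2^m + (card M + 1) * 2^m + (card N + 1) * 2^m + 2^m = (m + 1 + (card M + 1) + (card N + 1) + 1) * (2::nat)^m"
        by (simp only: add_mult_distrib mult_1_left)
      also have "m + 1 + (card M + 1) + (card N + 1) + 1 = (card S + 1) * 2" using cS m by simp
      also have "(card S + 1) * 2 * (2::nat)^m = (card S + 1) * 2 ^ card S" using cS by simp
      finally show ?thesis .
    qed
    have "?c * ?d \<le> (m+1) * 2^m + (card M + 1) * 2^m + (card N + 1) * 2^m + 2^m"
      by (rule order_trans[OF h1 order_trans[OF eq_imp_le[OF h2] h3]])
    thus ?thesis unfolding h4 .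
  qed
qed

lemma run_nil: "is_run A [] qs \<longleftrightarrow> (\<exists>q. qs = [q])"
  by (auto simp: is_run_def length_Suc_conv)

lemma run_cons: "is_run A (a#w) qs \<longleftrightarrow> (\<exists>q qs'. qs = q#qs' \<and> (q,a,hd qs')\<in>trans A \<and> is_run A w qs')"
proof
  assume r: "is_run A (a#w) qs"
  then obtain q qs' where qs: "qs = q#qs'" and l: "length qs' = Suc (length w)"
    by (auto simp: is_run_def length_Suc_conv)
  have "(q,a,qs'!0) \<in> trans A" using r qs by (auto simp: is_run_def)
  moreover have "qs'!0 = hd qs'" using l by (cases qs') auto
  moreover have "is_run A w qs'" using r qs l by (fastforce simp: is_run_def)
  ultimately show "\<exists>q qs'. qs = q#qs' \<and> (q,a,hd qs')\<in>trans A \<and> is_run A w qs'" using qs by auto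
next
  assume "\<exists>q qs'. qs = q#qs' \<and> (q,a,hd qs')\<in>trans A \<and> is_run A w qs'"
  then obtain q qs' where qs: "qs = q#qs'" and t: "(q,a,hd qs')\<in>trans A" and r: "is_run A w qs'" by blast
  have l: "length qs' = Suc (length w)" using r by (simp add: is_run_def)
  have h: "qs'!0 = hd qs'" using l by (cases qs') auto
  show "is_run A (a#w) qs"
    unfolding is_run_def
  proof (intro conjI allI impI)
    show "length qs = Suc (length (a#w))" using qs l by simp
    fix i assume "i < length (a#w)"
    then show "(qs ! i, (a # w) ! i, qs ! Suc i) \<in> trans A"
      using t h r qs by (cases i) (auto simp: is_run_def)
  qed
qed

lemma run_ne: "is_run A w qs \<Longrightarrow> qs \<noteq> []"
  by (auto simp: is_run_def)

definition post :: "('q,'a) nfa \<Rightarrow> 'q set \<Rightarrow> 'a \<Rightarrow> 'q set" where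
  "post A S a = {q'. \<exists>q\<in>S. (q,a,q') \<in> trans A}"
definition pre :: "('q,'a) nfa \<Rightarrow> 'a \<Rightarrow> 'q set \<Rightarrow> 'q set" where
  "pre A a T = {q. \<exists>q'\<in>T. (q,a,q') \<in> trans A}"

fun fwd :: "('q,'a) nfa \<Rightarrow> 'q set \<Rightarrow> 'a list \<Rightarrow> 'q set" where
  "fwd A S [] = S" | "fwd A S (a#w) = fwd A (post A S a) w"
fun bwd :: "('q,'a) nfa \<Rightarrow> 'q set \<Rightarrow> 'a list \<Rightarrow> 'q set" where
  "bwd A T [] = T" | "bwd A T (a#w) = pre A a (bwd A T w)"

lemma fwd_run: "q \<in> fwd A S w \<longleftrightarrow> (\<exists>qs. is_run A w qs \<and> hd qs \<in> S \<and> last qs = q)"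
proof (induction w arbitrary: S)
  case Nil then show ?case by (auto simp: run_nil)
next
  case (Cons a w)
  show ?case
  proof
    assume "q \<in> fwd A S (a#w)"
    then obtain qs where r: "is_run A w qs" "hd qs \<in> post A S a" "last qs = q" using Cons by auto
    then obtain p where "p \<in> S" "(p,a,hd qs) \<in> trans A" by (auto simp: post_def)
    then show "\<exists>qs. is_run A (a#w) qs \<and> hd qs \<in> S \<and> last qs = q"
      using r run_ne[OF r(1)] by (intro exI[of _ "p#qs"]) (auto simp: run_cons)
  next
    assume "\<exists>qs. is_run A (a#w) qs \<and> hd qs \<in> S \<and> last qs = q"
    then obtain qs0 where r0: "is_run A (a#w) qs0" "hd qs0 \<in> S" "last qs0 = q" by blast
    then obtain p qs where qs0: "qs0 = p#qs" "(p,a,hd qs) \<in> trans A" "is_run A w qs"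
      by (auto simp: run_cons)
    have ne: "qs \<noteq> []" using run_ne[OF qs0(3)] .
    have "hd qs \<in> post A S a" using qs0 r0 by (auto simp: post_def)
    moreover have "last qs = q" using r0 qs0 ne by simp
    ultimately have "q \<in> fwd A (post A S a) w" using Cons.IH qs0(3) by blast
    then show "q \<in> fwd A S (a#w)" by simp
  qed
qed

lemma bwd_run: "q \<in> bwd A T w \<longleftrightarrow> (\<exists>qs. is_run A w qs \<and> hd qs = q \<and> last qs \<in> T)"
proof (induction w arbitrary: q)
  case Nil then show ?case by (auto simp: run_nil)
next
  case (Cons a w)
  show ?case
  proof
    assume "q \<in> bwd A T (a#w)"
    then obtain q' where "q' \<in> bwd A T w" "(q,a,q') \<in> trans A" by (auto simp: pre_def)
    then obtain qs where r: "is_run A w qs" "hd qs = q'" "last qs \<in> T" using Cons by auto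
    then show "\<exists>qs. is_run A (a#w) qs \<and> hd qs = q \<and> last qs \<in> T"
      using \<open>(q,a,q') \<in> trans A\<close> run_ne[OF r(1)] by (intro exI[of _ "q#qs"]) (auto simp: run_cons)
  next
    assume "\<exists>qs. is_run A (a#w) qs \<and> hd qs = q \<and> last qs \<in> T"
    then obtain qs0 where r0: "is_run A (a#w) qs0" "hd qs0 = q" "last qs0 \<in> T" by blast
    then obtain p qs where qs0: "qs0 = p#qs" "(p,a,hd qs) \<in> trans A" "is_run A w qs"
      by (auto simp: run_cons)
    have ne: "qs \<noteq> []" using run_ne[OF qs0(3)] .
    have "last qs \<in> T" using r0 qs0 ne by simp
    then have "hd qs \<in> bwd A T w" using Cons.IH qs0(3) by blast
    then show "q \<in> bwd A T (a#w)" using qs0 r0 by (auto simp: pre_def)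
  qed
qed

lemma fwd_append: "fwd A S (u@v) = fwd A (fwd A S u) v"
  by (induction u arbitrary: S) auto
lemma bwd_append: "bwd A T (u@v) = bwd A (bwd A T v) u"
  by (induction u) auto

lemma fwd_sub: "wf_nfa A \<Longrightarrow> S \<subseteq> states A \<Longrightarrow> fwd A S w \<subseteq> states A"
proof (induction w arbitrary: S)
  case (Cons a w)
  have "post A S a \<subseteq> states A" using Cons.prems by (auto simp: wf_nfa_def post_def)
  then show ?case using Cons by simp
qed simp
lemma bwd_sub: "wf_nfa A \<Longrightarrow> T \<subseteq> states A \<Longrightarrow> bwd A T w \<subseteq> states A"
  by (induction w) (auto simp: wf_nfa_def pre_def)

lemma run_app: "is_run A u xs \<Longrightarrow> is_run A v ys \<Longrightarrow> last xs = hd ys \<Longrightarrow> is_run A (u@v) (xs @ tl ys)"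
proof (induction u arbitrary: xs)
  case Nil
  then obtain x where "xs = [x]" by (auto simp: run_nil)
  then show ?case using Nil run_ne[OF Nil(2)] by (cases ys) auto
next
  case (Cons a u)
  then obtain x xs' where xs: "xs = x#xs'" "(x,a,hd xs')\<in>trans A" "is_run A u xs'" by (auto simp: run_cons)
  have "xs' \<noteq> []" using run_ne[OF xs(3)] .
  then have "is_run A (u@v) (xs' @ tl ys)" using Cons xs by auto
  then show ?case using xs \<open>xs' \<noteq> []\<close> by (auto simp: run_cons)
qed

lemma lang_fwd: "w \<in> lang A \<longleftrightarrow> w \<in> lists (alphabet A) \<and> fwd A (init A) w \<inter> final A \<noteq> {}"
proof -
  have "(\<exists>qs. accepting_run A w qs) \<longleftrightarrow> fwd A (init A) w \<inter> final A \<noteq> {}"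
  proof
    assume "\<exists>qs. accepting_run A w qs"
    then obtain qs where "is_run A w qs" "hd qs \<in> init A" "last qs \<in> final A" by (auto simp: accepting_run_def)
    then have "last qs \<in> fwd A (init A) w" "last qs \<in> final A" using fwd_run[of "last qs" A "init A" w] by blast+
    then show "fwd A (init A) w \<inter> final A \<noteq> {}" by blast
  next
    assume "fwd A (init A) w \<inter> final A \<noteq> {}"
    then obtain q where q: "q \<in> fwd A (init A) w" "q \<in> final A" by blast
    then obtain qs where "is_run A w qs" "hd qs \<in> init A" "last qs = q" using fwd_run[of q A "init A" w] by blast
    then show "\<exists>qs. accepting_run A w qs" unfolding accepting_run_def using q by blast
  qed
  then show ?thesis by (simp add: lang_def)
qed
lemma lang_bwd: "w \<in> lang A \<longleftrightarrow> w \<in> lists (alphabet A) \<and> bwd A (final A) w \<inter> init A \<noteq> {}"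
proof -
  have "(\<exists>qs. accepting_run A w qs) \<longleftrightarrow> bwd A (final A) w \<inter> init A \<noteq> {}"
  proof
    assume "\<exists>qs. accepting_run A w qs"
    then obtain qs where "is_run A w qs" "hd qs \<in> init A" "last qs \<in> final A" by (auto simp: accepting_run_def)
    then have "hd qs \<in> bwd A (final A) w" "hd qs \<in> init A" using bwd_run[of "hd qs" A "final A" w] by blast+
    then show "bwd A (final A) w \<inter> init A \<noteq> {}" by blast
  next
    assume "bwd A (final A) w \<inter> init A \<noteq> {}"
    then obtain q where q: "q \<in> bwd A (final A) w" "q \<in> init A" by blast
    then obtain qs where "is_run A w qs" "hd qs = q" "last qs \<in> final A" using bwd_run[of q A "final A" w] by blast
    then show "\<exists>qs. accepting_run A w qs" unfolding accepting_run_def using q by blast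
  qed
  then show ?thesis by (simp add: lang_def)
qed

lemma inter_le1:
  assumes "ufa A" "u \<in> lists (alphabet A)" "v \<in> lists (alphabet A)"
    and "p \<in> fwd A (init A) u" "p \<in> bwd A (final A) v"
    and "q \<in> fwd A (init A) u" "q \<in> bwd A (final A) v"
  shows "p = q"
proof -
  obtain xs ys where x: "is_run A u xs" "hd xs \<in> init A" "last xs = p"
      and y: "is_run A v ys" "hd ys = p" "last ys \<in> final A"
    using assms(4,5) by (auto simp: fwd_run bwd_run)
  obtain xs' ys' where x': "is_run A u xs'" "hd xs' \<in> init A" "last xs' = q"
      and y': "is_run A v ys'" "hd ys' = q" "last ys' \<in> final A"
    using assms(6,7) by (auto simp: fwd_run bwd_run)
  have r1: "accepting_run A (u@v) (xs @ tl ys)"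
    unfolding accepting_run_def using run_app[OF x(1) y(1)] x y run_ne[OF x(1)] run_ne[OF y(1)]
    by (cases ys) (auto simp: last_append)
  have r2: "accepting_run A (u@v) (xs' @ tl ys')"
    unfolding accepting_run_def using run_app[OF x'(1) y'(1)] x' y' run_ne[OF x'(1)] run_ne[OF y'(1)]
    by (cases ys') (auto simp: last_append)
  have "u @ v \<in> lists (alphabet A)" using assms(2,3) by simp
  then have "xs @ tl ys = xs' @ tl ys'" using assms(1) r1 r2 unfolding ufa_def by blast
  moreover have "length xs = length xs'" using x(1) x'(1) by (simp add: is_run_def)
  ultimately have "xs = xs'" by simp
  then show ?thesis using x x' by simp
qed

definition XS :: "('q,'a) nfa \<Rightarrow> 'q set set" where "XS A = fwd A (init A) ` lists (alphabet A)"
definition YS :: "('q,'a) nfa \<Rightarrow> 'q set set" where "YS A = bwd A (final A) ` lists (alphabet A)"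

definition cdfa :: "('q,'a) nfa \<Rightarrow> ('q set,'a) nfa" where
 "cdfa A = \<lparr>states = XS A, alphabet = alphabet A,
    trans = {(X,a,post A X a) | X a. X \<in> XS A \<and> a \<in> alphabet A}, init = {init A},
    final = {X\<in>XS A. X \<inter> final A = {}}\<rparr>"

definition crdfa :: "('q,'a) nfa \<Rightarrow> ('q set,'a) nfa" where
 "crdfa A = \<lparr>states = YS A, alphabet = alphabet A,
    trans = {(pre A a Y, a, Y) | Y a. Y \<in> YS A \<and> a \<in> alphabet A},
    init = {Y\<in>YS A. Y \<inter> init A = {}}, final = {final A}\<rparr>"

fun drun :: "('q,'a) nfa \<Rightarrow> 'q set \<Rightarrow> 'a list \<Rightarrow> 'q set list" where
  "drun A S [] = [S]" | "drun A S (a#w) = S # drun A (post A S a) w"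
fun rrun :: "('q,'a) nfa \<Rightarrow> 'a list \<Rightarrow> 'q set \<Rightarrow> 'q set list" where
  "rrun A [] T = [T]" | "rrun A (a#w) T = pre A a (bwd A T w) # rrun A w T"

lemma drun_ne[simp]: "drun A S w \<noteq> []" by (cases w) auto
lemma rrun_ne[simp]: "rrun A w T \<noteq> []" by (cases w) auto
lemma drun_hd[simp]: "hd (drun A S w) = S" by (cases w) auto
lemma rrun_hd[simp]: "hd (rrun A w T) = bwd A T w" by (cases w) auto
lemma drun_last[simp]: "last (drun A S w) = fwd A S w" by (induction w arbitrary: S) auto
lemma rrun_last[simp]: "last (rrun A w T) = T" by (induction w) auto

lemma XS_post: "X \<in> XS A \<Longrightarrow> a \<in> alphabet A \<Longrightarrow> post A X a \<in> XS A"
proof -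
  assume "X \<in> XS A" "a \<in> alphabet A"
  then obtain u where u: "u \<in> lists (alphabet A)" "X = fwd A (init A) u" by (auto simp: XS_def)
  then have "post A X a = fwd A (init A) (u@[a])" by (simp add: fwd_append)
  moreover have "u@[a] \<in> lists (alphabet A)" using u \<open>a \<in> alphabet A\<close> by simp
  ultimately show ?thesis unfolding XS_def by blast
qed

lemma init_XS: "init A \<in> XS A"
  unfolding XS_def by (rule image_eqI[of _ _ "[]"]) auto

lemma YS_bwd: "T \<in> YS A \<Longrightarrow> w \<in> lists (alphabet A) \<Longrightarrow> bwd A T w \<in> YS A"
proof -
  assume "T \<in> YS A" "w \<in> lists (alphabet A)"
  then obtain u where u: "u \<in> lists (alphabet A)" "T = bwd A (final A) u" by (auto simp: YS_def)
  then have "bwd A T w = bwd A (final A) (w@u)" by (simp add: bwd_append)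
  moreover have "w@u \<in> lists (alphabet A)" using u \<open>w \<in> lists (alphabet A)\<close> by simp
  ultimately show ?thesis unfolding YS_def by blast
qed

lemma final_YS: "final A \<in> YS A"
  unfolding YS_def by (rule image_eqI[of _ _ "[]"]) auto

lemma YS_pre: "Y \<in> YS A \<Longrightarrow> a \<in> alphabet A \<Longrightarrow> pre A a Y \<in> YS A"
  using YS_bwd[of Y A "[a]"] by simp

lemma XS_fin: "wf_nfa A \<Longrightarrow> XS A \<subseteq> Pow (states A) \<and> finite (XS A)"
proof -
  assume w: "wf_nfa A"
  have "XS A \<subseteq> Pow (states A)" using fwd_sub[OF w] w by (auto simp: XS_def wf_nfa_def)
  moreover have "finite (Pow (states A))" using w by (simp add: wf_nfa_def)
  ultimately show ?thesis using finite_subset by blast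
qed

lemma YS_fin: "wf_nfa A \<Longrightarrow> YS A \<subseteq> Pow (states A) \<and> finite (YS A)"
proof -
  assume w: "wf_nfa A"
  have "YS A \<subseteq> Pow (states A)" using bwd_sub[OF w] w by (auto simp: YS_def wf_nfa_def)
  moreover have "finite (Pow (states A))" using w by (simp add: wf_nfa_def)
  ultimately show ?thesis using finite_subset by blast
qed

lemma cdfa_det: "is_run (cdfa A) w qs \<Longrightarrow> qs = drun A (hd qs) w"
proof (induction w arbitrary: qs)
  case Nil then show ?case by (auto simp: run_nil)
next
  case (Cons a w)
  then obtain q qs' where q: "qs = q#qs'" "(q,a,hd qs') \<in> trans (cdfa A)" "is_run (cdfa A) w qs'"
    by (auto simp: run_cons)
  have "hd qs' = post A q a" using q(2) by (auto simp: cdfa_def)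
  then show ?case using Cons.IH[OF q(3)] q(1) by simp
qed

lemma cdfa_ex: "w \<in> lists (alphabet A) \<Longrightarrow> S \<in> XS A \<Longrightarrow> is_run (cdfa A) w (drun A S w)"
proof (induction w arbitrary: S)
  case Nil then show ?case by (simp add: run_nil)
next
  case (Cons a w)
  have "post A S a \<in> XS A" using Cons.prems XS_post by auto
  then have "is_run (cdfa A) w (drun A (post A S a) w)" using Cons by simp
  moreover have "(S, a, post A S a) \<in> trans (cdfa A)" using Cons.prems by (auto simp: cdfa_def)
  ultimately show ?case by (auto simp: run_cons)
qed

lemma crdfa_det: "is_run (crdfa A) w qs \<Longrightarrow> qs = rrun A w (last qs)"
proof (induction w arbitrary: qs)
  case Nil then show ?case by (auto simp: run_nil)
next
  case (Cons a w)
  then obtain q qs' where q: "qs = q#qs'" "(q,a,hd qs') \<in> trans (crdfa A)" "is_run (crdfa A) w qs'"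
    by (auto simp: run_cons)
  have ne: "qs' \<noteq> []" using run_ne[OF q(3)] .
  have e: "q = pre A a (hd qs')" using q(2) by (auto simp: crdfa_def)
  have IH: "qs' = rrun A w (last qs')" using Cons.IH[OF q(3)] .
  then have "hd qs' = bwd A (last qs') w" by (metis rrun_hd)
  then show ?case using IH q(1) e ne by simp
qed

lemma crdfa_ex: "w \<in> lists (alphabet A) \<Longrightarrow> T \<in> YS A \<Longrightarrow> is_run (crdfa A) w (rrun A w T)"
proof (induction w)
  case Nil then show ?case by (simp add: run_nil)
next
  case (Cons a w)
  have "bwd A T w \<in> YS A" using Cons.prems YS_bwd by auto
  then have "(pre A a (bwd A T w), a, bwd A T w) \<in> trans (crdfa A)" using Cons.prems by (auto simp: crdfa_def)
  then show ?case using Cons by (auto simp: run_cons)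
qed

lemma cdfa_ok: assumes "ufa A"
  shows "ufa (cdfa A) \<and> alphabet (cdfa A) = alphabet A \<and> states (cdfa A) = XS A
     \<and> lang (cdfa A) = lists (alphabet A) - lang A"
proof -
  have w: "wf_nfa A" using assms by (simp add: ufa_def)
  have wf: "wf_nfa (cdfa A)" using XS_fin[OF w] XS_post init_XS w
    by (auto simp: wf_nfa_def cdfa_def)
  have acc: "accepting_run (cdfa A) w qs \<Longrightarrow> qs = drun A (init A) w" for w qs
    using cdfa_det[of A w qs] by (auto simp: accepting_run_def cdfa_def)
  have l: "lang (cdfa A) = lists (alphabet A) - lang A"
  proof (intro set_eqI iffI)
    fix w assume "w \<in> lang (cdfa A)"
    then obtain qs where "w \<in> lists (alphabet A)" "accepting_run (cdfa A) w qs"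
      by (auto simp: lang_def cdfa_def)
    moreover then have "last qs \<in> final (cdfa A)" "qs = drun A (init A) w" using acc by (auto simp: accepting_run_def)
    ultimately show "w \<in> lists (alphabet A) - lang A" by (auto simp: cdfa_def lang_fwd)
  next
    fix w assume a: "w \<in> lists (alphabet A) - lang A"
    have "fwd A (init A) w \<in> XS A" using a by (auto simp: XS_def)
    then have "accepting_run (cdfa A) w (drun A (init A) w)"
      using cdfa_ex[OF _ init_XS, of w] a by (auto simp: accepting_run_def cdfa_def lang_fwd)
    then show "w \<in> lang (cdfa A)" using a by (auto simp: lang_def cdfa_def)
  qed
  have "ufa (cdfa A)" using wf acc unfolding ufa_def by metis
  then show ?thesis using l by (simp add: cdfa_def)
qed

lemma crdfa_ok: assumes "ufa A"
  shows "ufa (crdfa A) \<and> alphabet (crdfa A) = alphabet A \<and> states (crdfa A) = YS A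
     \<and> lang (crdfa A) = lists (alphabet A) - lang A"
proof -
  have w: "wf_nfa A" using assms by (simp add: ufa_def)
  have wf: "wf_nfa (crdfa A)" using YS_fin[OF w] YS_pre final_YS w
    by (auto simp: wf_nfa_def crdfa_def)
  have acc: "accepting_run (crdfa A) w qs \<Longrightarrow> qs = rrun A w (final A)" for w qs
    using crdfa_det[of A w qs] by (auto simp: accepting_run_def crdfa_def)
  have l: "lang (crdfa A) = lists (alphabet A) - lang A"
  proof (intro set_eqI iffI)
    fix w assume "w \<in> lang (crdfa A)"
    then obtain qs where "w \<in> lists (alphabet A)" "accepting_run (crdfa A) w qs"
      by (auto simp: lang_def crdfa_def)
    moreover then have "hd qs \<in> init (crdfa A)" "qs = rrun A w (final A)" using acc by (auto simp: accepting_run_def)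
    ultimately show "w \<in> lists (alphabet A) - lang A" by (auto simp: crdfa_def lang_bwd)
  next
    fix w assume a: "w \<in> lists (alphabet A) - lang A"
    have "bwd A (final A) w \<in> YS A" using a by (auto simp: YS_def)
    then have "accepting_run (crdfa A) w (rrun A w (final A))"
      using crdfa_ex[OF _ final_YS, of w] a by (auto simp: accepting_run_def crdfa_def lang_bwd)
    then show "w \<in> lang (crdfa A)" using a by (auto simp: lang_def crdfa_def)
  qed
  have "ufa (crdfa A)" using wf acc unfolding ufa_def by metis
  then show ?thesis using l by (simp add: crdfa_def)
qed

definition rn :: "('q \<Rightarrow> 'r) \<Rightarrow> ('q,'a) nfa \<Rightarrow> ('r,'a) nfa" where
  "rn f B = \<lparr>states = f ` states B, alphabet = alphabet B,
     trans = (\<lambda>(p,a,q). (f p, a, f q)) ` trans B, init = f ` init B, final = f ` final B\<rparr>"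

lemma rn_run1: "is_run B w qs \<Longrightarrow> is_run (rn f B) w (map f qs)"
proof (induction w arbitrary: qs)
  case Nil then show ?case by (auto simp: run_nil)
next
  case (Cons a w)
  then obtain q qs' where q: "qs = q#qs'" "(q,a,hd qs') \<in> trans B" "is_run B w qs'"
    by (auto simp: run_cons)
  have ne: "qs' \<noteq> []" using run_ne[OF q(3)] .
  have "(f q, a, f (hd qs')) \<in> trans (rn f B)" using q(2) by (force simp: rn_def)
  then show ?case using Cons.IH[OF q(3)] q(1) ne by (auto simp: run_cons hd_map)
qed

lemma rn_run2: "wf_nfa B \<Longrightarrow> inj_on f (states B) \<Longrightarrow> is_run (rn f B) w qs \<Longrightarrow> hd qs \<in> f ` states B
  \<Longrightarrow> \<exists>qs'. is_run B w qs' \<and> qs = map f qs' \<and> set qs' \<subseteq> states B"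
proof (induction w arbitrary: qs)
  case Nil
  then obtain x where x: "qs = [x]" by (auto simp: run_nil)
  then obtain y where "y \<in> states B" "x = f y" using Nil by auto
  then show ?case using x by (intro exI[of _ "[y]"]) (auto simp: run_nil)
next
  case (Cons a w)
  then obtain x xs where q: "qs = x#xs" "(x,a,hd xs) \<in> trans (rn f B)" "is_run (rn f B) w xs"
    by (auto simp: run_cons)
  then obtain p0 q0 where t: "(p0,a,q0) \<in> trans B" "x = f p0" "hd xs = f q0" by (auto simp: rn_def)
  have st: "p0 \<in> states B" "q0 \<in> states B" using t(1) Cons.prems(1) by (auto simp: wf_nfa_def)
  obtain xs' where xs': "is_run B w xs'" "xs = map f xs'" "set xs' \<subseteq> states B"
    using Cons.IH[OF Cons.prems(1,2) q(3)] t(3) st by auto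
  have ne: "xs' \<noteq> []" using run_ne[OF xs'(1)] .
  have "f (hd xs') = f q0" using t(3) xs'(2) ne by (simp add: hd_map)
  moreover have "hd xs' \<in> states B" using xs'(3) ne by auto
  ultimately have "hd xs' = q0" using Cons.prems(2) st inj_on_def by metis
  then have "is_run B (a#w) (p0#xs')" using t(1) xs'(1) by (auto simp: run_cons)
  then show ?case using q(1) t(2) xs' st by (intro exI[of _ "p0#xs'"]) auto
qed

lemma rn_ok:
  assumes "ufa B" "inj_on f (states B)"
  shows "ufa (rn f B) \<and> lang (rn f B) = lang B \<and> card (states (rn f B)) = card (states B)
      \<and> alphabet (rn f B) = alphabet B"
proof -
  have w: "wf_nfa B" using assms by (simp add: ufa_def)
  have acc: "accepting_run (rn f B) w qs \<longleftrightarrow> (\<exists>qs'. accepting_run B w qs' \<and> qs = map f qs')" for w qs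
  proof
    assume a: "accepting_run (rn f B) w qs"
    then have r: "is_run (rn f B) w qs" "hd qs \<in> f ` init B" "last qs \<in> f ` final B"
      by (auto simp: accepting_run_def rn_def)
    have "hd qs \<in> f ` states B" using r(2) w by (auto simp: wf_nfa_def)
    then obtain qs' where q: "is_run B w qs'" "qs = map f qs'" "set qs' \<subseteq> states B"
      using rn_run2[OF w assms(2) r(1)] by blast
    have ne: "qs' \<noteq> []" using run_ne[OF q(1)] .
    have h: "hd qs' \<in> states B" "last qs' \<in> states B" using q(3) ne by auto
    have "f (hd qs') \<in> f ` init B" using r(2) q(2) ne by (simp add: hd_map)
    then have "hd qs' \<in> init B" using inj_on_image_mem_iff[OF assms(2) h(1)] w by (auto simp: wf_nfa_def)
    moreover have "f (last qs') \<in> f ` final B" using r(3) q(2) ne by (simp add: last_map)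
    then have "last qs' \<in> final B" using inj_on_image_mem_iff[OF assms(2) h(2)] w by (auto simp: wf_nfa_def)
    ultimately show "\<exists>qs'. accepting_run B w qs' \<and> qs = map f qs'"
      using q by (auto simp: accepting_run_def)
  next
    assume "\<exists>qs'. accepting_run B w qs' \<and> qs = map f qs'"
    then obtain qs' where q: "accepting_run B w qs'" "qs = map f qs'" by blast
    have ne: "qs' \<noteq> []" using q(1) run_ne by (auto simp: accepting_run_def)
    show "accepting_run (rn f B) w qs" using q rn_run1[of B w qs' f] ne
      by (auto simp: accepting_run_def rn_def hd_map last_map)
  qed
  have wf: "wf_nfa (rn f B)" using w by (force simp: wf_nfa_def rn_def)
  have u: "ufa (rn f B)"
    unfolding ufa_def
  proof (intro conjI wf ballI allI impI)
    fix w qs qs' assume "w \<in> lists (alphabet (rn f B))" "accepting_run (rn f B) w qs \<and> accepting_run (rn f B) w qs'"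
    then obtain r r' where "accepting_run B w r" "accepting_run B w r'" "qs = map f r" "qs' = map f r'"
      "w \<in> lists (alphabet B)" using acc by (auto simp: rn_def)
    then show "qs = qs'" using assms(1) unfolding ufa_def by blast
  qed
  have l: "lang (rn f B) = lang B" using acc by (auto simp: lang_def rn_def)
  have "card (states (rn f B)) = card (states B)" using card_image[OF assms(2)] by (simp add: rn_def)
  then show ?thesis using u l by (simp add: rn_def)
qed

lemma sqrt_bound:
  fixes k n :: nat
  assumes "k * k \<le> (n+1) * 2^n"
  shows "real k \<le> sqrt (real n + 1) * 2 powr (real n / 2)"
proof -
  have "real (k*k) \<le> real ((n+1) * 2^n)" using assms by (simp only: of_nat_le_iff)
  moreover have "(real k)^2 = real (k*k)" by (simp add: power2_eq_square)
  ultimately have "(real k)^2 \<le> real ((n+1) * 2^n)" by simp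
  then have "real k \<le> sqrt (real ((n+1) * 2^n))" by (rule real_le_rsqrt)
  also have "\<dots> = sqrt (real n + 1) * sqrt (2 powr real n)" by (simp only: of_nat_mult of_nat_add of_nat_1 of_nat_power of_nat_numeral real_sqrt_mult powr_realpow[of 2 n, simplified])
  also have "sqrt (2 powr real n) = 2 powr (real n / 2)" by (simp add: powr_half_sqrt_powr)
  finally show ?thesis .
qed

theorem theorem1:
  fixes A :: "('q, 'a) nfa" and n :: nat and L :: "'a list set"
  assumes "ufa A"
    and "card (states A) = n"
    and "lang A = L"
  shows "\<exists>B :: (nat, 'a) nfa. ufa B \<and> alphabet B = alphabet A
           \<and> real (card (states B)) \<le> sqrt (real n + 1) * 2 powr (real n / 2)
           \<and> lang B = lists (alphabet A) - L"
proof -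
  have w: "wf_nfa A" using assms(1) by (simp add: ufa_def)
  have fQ: "finite (states A)" using w by (simp add: wf_nfa_def)
  define E where "E = (\<lambda>u v. \<exists>X\<in>XS A. u \<in> X \<and> v \<in> X)"
  have X1: "XS A \<subseteq> cliq E (states A)" using XS_fin[OF w] by (auto simp: cliq_def E_def)
  have Y1: "YS A \<subseteq> cliq (\<lambda>u v. \<not> E u v) (states A)"
  proof
    fix Y assume Y: "Y \<in> YS A"
    then obtain v where v: "v \<in> lists (alphabet A)" "Y = bwd A (final A) v" by (auto simp: YS_def)
    have "Y \<subseteq> states A" using Y YS_fin[OF w] by auto
    moreover have "\<not> E p q" if "p \<in> Y" "q \<in> Y" "p \<noteq> q" for p q
    proof
      assume "E p q"
      then obtain X where "X \<in> XS A" "p \<in> X" "q \<in> X" by (auto simp: E_def)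
      then obtain u where "u \<in> lists (alphabet A)" "X = fwd A (init A) u" by (auto simp: XS_def)
      then have "p = q" using inter_le1[OF assms(1) _ v(1)] that v(2) \<open>p \<in> X\<close> \<open>q \<in> X\<close> by blast
      then show False using that by simp
    qed
    ultimately show "Y \<in> cliq (\<lambda>u v. \<not> E u v) (states A)" by (auto simp: cliq_def)
  qed
  have "card (XS A) * card (YS A) \<le> card (cliq E (states A)) * card (cliq (\<lambda>u v. \<not> E u v) (states A))"
    by (intro mult_le_mono card_mono cliq_fin fQ X1 Y1)
  also have "\<dots> \<le> (n+1) * 2^n" using cc[OF fQ, of E] assms(2) by simp
  finally have prod: "card (XS A) * card (YS A) \<le> (n+1) * 2^n" .
  define B0 where "B0 = (if card (XS A) \<le> card (YS A) then cdfa A else crdfa A)"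
  have B0: "ufa B0" "alphabet B0 = alphabet A" "lang B0 = lists (alphabet A) - L"
      "card (states B0) = min (card (XS A)) (card (YS A))"
    using cdfa_ok[OF assms(1)] crdfa_ok[OF assms(1)] assms(3) by (auto simp: B0_def)
  have "min (card (XS A)) (card (YS A)) * min (card (XS A)) (card (YS A)) \<le> card (XS A) * card (YS A)"
    by (rule mult_le_mono[OF min.cobounded1 min.cobounded2])
  then have "card (states B0) * card (states B0) \<le> (n+1) * 2^n"
    unfolding B0(4) using prod by (rule order_trans)
  then have bnd: "real (card (states B0)) \<le> sqrt (real n + 1) * 2 powr (real n / 2)"
    by (rule sqrt_bound)
  have "finite (states B0)" using B0(1) by (simp add: ufa_def wf_nfa_def)
  then obtain f :: "'q set \<Rightarrow> nat" and m where f: "f ` states B0 = {i. i < m}" "inj_on f (states B0)"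
    using finite_imp_inj_to_nat_seg by blast
  have R: "ufa (rn f B0) \<and> lang (rn f B0) = lang B0 \<and> card (states (rn f B0)) = card (states B0)
      \<and> alphabet (rn f B0) = alphabet B0" using rn_ok[OF B0(1) f(2)] .
  show ?thesis
    by (rule exI[of _ "rn f B0"]) (use R B0 bnd in auto)
qed

end
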